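(* Let $G$ be a finite simple graph on $n$ vertices with $m$ edges. Let $I(G)=\sum_{\{u,v\}\in E(G)}|d(u)-d(v)|$, let $Z_G=\sum_{u\in V(G)} d(u)^2$, and let $\lambda_{\max}$ be the largest eigenvalue of the Laplacian matrix of $G$. Then $$I(G)\le \sqrt{m\,(nZ_G-4m^2)\,(\lambda_{\max}/n)}.$$
   Context: $d(u)$ denotes the degree of vertex $u$. The Laplacian matrix $L$ of a graph $G$ with vertex set $\{1,\dots,n\}$ is the $n\times n$ matrix with $L_{ij}=-1$ if $\{i,j\}\in E(G)$, $L_{ij}=0$ if $i\neq j$ and $\{i,j\}\notin E(G)$, and $L_{ii}=d(i)$; it is symmetric positive semidefinite, so its eigenvalues are real and nonnegative. *)

theory Defs
  imports "HOL-Analysis.Analysis"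
begin

definition simple_graph :: "('n::finite \<Rightarrow> 'n \<Rightarrow> bool) \<Rightarrow> bool" where
  "simple_graph E \<longleftrightarrow> (\<forall>u v. E u v \<longrightarrow> E v u) \<and> (\<forall>u. \<not> E u u)"

definition degree :: "('n::finite \<Rightarrow> 'n \<Rightarrow> bool) \<Rightarrow> 'n \<Rightarrow> nat" where
  "degree E u = card {v. E u v}"

definition edges :: "('n::finite \<Rightarrow> 'n \<Rightarrow> bool) \<Rightarrow> 'n set set" where
  "edges E = {{u, v} | u v. E u v}"

definition laplacian :: "('n::finite \<Rightarrow> 'n \<Rightarrow> bool) \<Rightarrow> real ^ 'n ^ 'n" where
  "laplacian E = (\<chi> i j. if i = j then real (degree E i) else if E i j then -1 else 0)"

definition mat_eigenvalue :: "real ^ 'n ^ 'n \<Rightarrow> real \<Rightarrow> bool" where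
  "mat_eigenvalue A l \<longleftrightarrow> (\<exists>x. x \<noteq> 0 \<and> A *v x = l *\<^sub>R x)"

text \<open>Largest eigenvalue of the Laplacian (real symmetric, so all eigenvalues real).\<close>
definition lambda_max :: "('n::finite \<Rightarrow> 'n \<Rightarrow> bool) \<Rightarrow> real" where
  "lambda_max E = Max {l. mat_eigenvalue (laplacian E) l}"

text \<open>Sum over edges {u,v} of |d u - d v|; each edge counted twice in the ordered sum.\<close>
definition irregularity :: "('n::finite \<Rightarrow> 'n \<Rightarrow> bool) \<Rightarrow> real" where
  "irregularity E = (\<Sum>u\<in>UNIV. \<Sum>v\<in>{v. E u v}. \<bar>real (degree E u) - real (degree E v)\<bar>) / 2"

definition zagreb1 :: "('n::finite \<Rightarrow> 'n \<Rightarrow> bool) \<Rightarrow> real" where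
  "zagreb1 E = (\<Sum>u\<in>UNIV. real (degree E u) ^ 2)"

end

theory Submission imports Defs begin

lemma sym_inner:
  fixes A :: "real^'n^'n"
  assumes s: "\<And>i j. A$i$j = A$j$i"
  shows "x \<bullet> (A *v y) = y \<bullet> (A *v x)"
proof -
  have "x \<bullet> (A *v y) = (\<Sum>i\<in>UNIV. \<Sum>j\<in>UNIV. x$i * A$i$j * y$j)"
    unfolding inner_vec_def matrix_vector_mult_def by (simp add: sum_distrib_left mult_ac)
  also have "\<dots> = (\<Sum>j\<in>UNIV. \<Sum>i\<in>UNIV. x$i * A$i$j * y$j)" by (rule sum.swap)
  also have "\<dots> = y \<bullet> (A *v x)"
    unfolding inner_vec_def matrix_vector_mult_def by (simp add: sum_distrib_left mult_ac s)
  finally show ?thesis .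
qed

lemma rayleigh:
  fixes A :: "real^'n^'n"
  assumes s: "\<And>i j. A$i$j = A$j$i"
  shows "\<exists>l. mat_eigenvalue A l \<and> (\<forall>x. x \<bullet> (A *v x) \<le> l * (x \<bullet> x))"
proof -
  define q where "q x = x \<bullet> (A *v x)" for x :: "real^'n"
  have cont: "continuous_on (sphere 0 1) q"
    unfolding q_def by (intro continuous_intros linear_continuous_on linear_linear matrix_vector_mul_linear)
  obtain v where v: "v \<in> sphere 0 1" and vmax: "\<And>y. y \<in> sphere 0 1 \<Longrightarrow> q y \<le> q v"
    using continuous_attains_sup[OF compact_sphere _ cont] by auto
  define \<mu> where "\<mu> = q v"
  have vv: "v \<bullet> v = 1" using v by (metis mem_sphere_0 norm_eq_1)
  have qs: "q (c *\<^sub>R x) = c^2 * q x" for c x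
    unfolding q_def by (simp add: matrix_vector_mult_scaleR power2_eq_square)
  have bound: "q x \<le> \<mu> * (x \<bullet> x)" for x
  proof (cases "x = 0")
    case True then show ?thesis by (simp add: q_def)
  next
    case False
    then have nx: "norm x > 0" by simp
    have "(inverse (norm x)) *\<^sub>R x \<in> sphere 0 1" using nx by (simp add: norm_scaleR)
    then have "q ((inverse (norm x)) *\<^sub>R x) \<le> \<mu>" using vmax \<mu>_def by blast
    then have "q x / (norm x)^2 \<le> \<mu>" by (simp add: qs power_inverse divide_inverse mult.commute)
    then have "q x \<le> \<mu> * (norm x)^2" using nx by (simp add: divide_le_eq mult.commute)
    then show ?thesis by (simp add: power2_norm_eq_inner)
  qed
  define w where "w = \<mu> *\<^sub>R v - A *v v"
  define b where "b x y = \<mu> * (x \<bullet> y) - x \<bullet> (A *v y)" for x y :: "real^'n"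
  have bnn: "b x x \<ge> 0" for x using bound[of x] by (simp add: b_def q_def)
  have bvv: "b v v = 0" by (simp add: b_def \<mu>_def q_def vv)
  have bwv: "b w v = w \<bullet> w" by (simp add: b_def w_def inner_diff_right)
  have key: "0 \<le> 2 * t * (w \<bullet> w) + t^2 * b w w" for t
  proof -
    have e1: "(v + t *\<^sub>R w) \<bullet> (v + t *\<^sub>R w) = v \<bullet> v + 2 * t * (w \<bullet> v) + t^2 * (w \<bullet> w)"
      unfolding inner_add_left inner_add_right inner_scaleR_left inner_scaleR_right inner_commute[of v w]
      by (simp add: power2_eq_square algebra_simps)
    have e2: "(v + t *\<^sub>R w) \<bullet> (A *v (v + t *\<^sub>R w)) = v \<bullet> (A *v v) + 2 * t * (w \<bullet> (A *v v)) + t^2 * (w \<bullet> (A *v w))"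
      unfolding matrix_vector_right_distrib matrix_vector_mult_scaleR inner_add_left inner_add_right inner_scaleR_left inner_scaleR_right sym_inner[OF s, of v w]
      by (simp add: power2_eq_square algebra_simps)
    have ww: "w \<bullet> w = \<mu> * (w \<bullet> v) - w \<bullet> (A *v v)" unfolding w_def by (simp add: inner_diff_right)
    have mu: "\<mu> = v \<bullet> (A *v v)" unfolding \<mu>_def q_def ..
    have "0 \<le> b (v + t *\<^sub>R w) (v + t *\<^sub>R w)" by (rule bnn)
    also have "b (v + t *\<^sub>R w) (v + t *\<^sub>R w) = \<mu> * (v \<bullet> v + 2 * t * (w \<bullet> v) + t^2 * (w \<bullet> w)) - (v \<bullet> (A *v v) + 2 * t * (w \<bullet> (A *v v)) + t^2 * (w \<bullet> (A *v w)))"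
      unfolding b_def e1 e2 ..
    also have "\<dots> = 2 * t * (\<mu> * (w \<bullet> v) - w \<bullet> (A *v v)) + t^2 * b w w"
      unfolding b_def vv mu[symmetric] by (simp add: algebra_simps)
    finally show ?thesis unfolding ww .
  qed
  have "w \<bullet> w = 0"
  proof (rule ccontr)
    assume ne: "w \<bullet> w \<noteq> 0"
    then have p: "w \<bullet> w > 0" by (simp add: order_less_le)
    show False
    proof (cases "b w w = 0")
      case True then show False using key[of "-1"] p by simp
    next
      case False
      then have bp: "b w w > 0" using bnn[of w] by simp
      have "0 \<le> 2 * (- (w \<bullet> w) / b w w) * (w \<bullet> w) + (- (w \<bullet> w) / b w w)^2 * b w w"
        by (rule key)
      also have "\<dots> = - (((w \<bullet> w)^2) / b w w)" using bp by (simp add: field_simps power2_eq_square)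
      finally have "(w \<bullet> w)^2 / b w w \<le> 0" by simp
      moreover have "(w \<bullet> w)^2 / b w w > 0" using bp p by simp
      ultimately show False by simp
    qed
  qed
  then have "w = 0" by simp
  then have "A *v v = \<mu> *\<^sub>R v" by (simp add: w_def)
  moreover have "v \<noteq> 0" using v by auto
  ultimately have "mat_eigenvalue A \<mu>" unfolding mat_eigenvalue_def by blast
  then show ?thesis using bound unfolding q_def by blast
qed

lemma finite_eig:
  fixes A :: "real^'n^'n"
  assumes s: "\<And>i j. A$i$j = A$j$i"
  shows "finite {l. mat_eigenvalue A l}"
proof -
  let ?L = "{l. mat_eigenvalue A l}"
  define f where "f l = (SOME x. x \<noteq> 0 \<and> A *v x = l *\<^sub>R x)" for l
  have fp: "f l \<noteq> 0 \<and> A *v f l = l *\<^sub>R f l" if lL: "l \<in> ?L" for l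
  proof -
    obtain x where "x \<noteq> 0 \<and> A *v x = l *\<^sub>R x" using lL unfolding mat_eigenvalue_def by auto
    then show ?thesis unfolding f_def by (rule someI[where P="\<lambda>x. x \<noteq> 0 \<and> A *v x = l *\<^sub>R x"])
  qed
  have inj: "inj_on f ?L"
  proof (rule inj_onI)
    fix a b assume a: "a \<in> ?L" and b: "b \<in> ?L" and e: "f a = f b"
    have "a *\<^sub>R f a = A *v f a" using fp[OF a] by (simp only:)
    also have "\<dots> = A *v f b" by (simp only: e)
    also have "\<dots> = b *\<^sub>R f b" using fp[OF b] by (simp only:)
    also have "\<dots> = b *\<^sub>R f a" by (simp only: e)
    finally have "a *\<^sub>R f a = b *\<^sub>R f a" .
    then have "(a - b) *\<^sub>R f a = 0" by (simp add: algebra_simps)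
    then show "a = b" using fp[OF a] by simp
  qed
  have orth: "pairwise orthogonal (f ` ?L)"
    unfolding pairwise_def
  proof (intro ballI impI)
    fix x y assume x: "x \<in> f ` ?L" and y: "y \<in> f ` ?L" and nexy: "x \<noteq> y"
    obtain a where a: "a \<in> ?L" and xa: "x = f a" using x by blast
    obtain b where b: "b \<in> ?L" and yb: "y = f b" using y by blast
    have ne: "f a \<noteq> f b" using nexy xa yb by simp
    have "f a \<bullet> (A *v f b) = f b \<bullet> (A *v f a)" by (rule sym_inner[OF s])
    then have "f a \<bullet> (b *\<^sub>R f b) = f b \<bullet> (a *\<^sub>R f a)" using fp[OF a] fp[OF b] by (simp only:)
    then have "b * (f a \<bullet> f b) = a * (f b \<bullet> f a)" unfolding inner_scaleR_right .
    then have "b * (f a \<bullet> f b) = a * (f a \<bullet> f b)" unfolding inner_commute[of "f b" "f a"] .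
    moreover have "a \<noteq> b" using ne by auto
    ultimately have "f a \<bullet> f b = 0" by simp
    then show "orthogonal x y" by (simp add: orthogonal_def xa yb)
  qed
  have "0 \<notin> f ` ?L"
  proof
    assume "0 \<in> f ` ?L"
    then obtain l where l0: "0 = f l" and lL: "l \<in> ?L" by (rule imageE)
    have "f l \<noteq> 0" using fp[OF lL] by (rule conjunct1)
    then show False using l0[symmetric] by (rule notE)
  qed
  then have "independent (f ` ?L)" by (rule pairwise_orthogonal_independent[OF orth])
  then have "finite (f ` ?L)" by (rule independent_bound[THEN conjunct1])
  then show ?thesis by (rule finite_imageD[OF _ inj])
qed


lemma lap_sym:
  assumes g: "simple_graph E"
  shows "laplacian E $ i $ j = laplacian E $ j $ i"
  using g unfolding laplacian_def simple_graph_def by auto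

lemma handshake:
  fixes E :: "'n::finite \<Rightarrow> 'n \<Rightarrow> bool"
  assumes g: "simple_graph E"
  shows "card (SIGMA u:UNIV. {v. E u v}) = 2 * card (edges E)"
proof -
  let ?P = "SIGMA u:UNIV. {v. E u v}"
  define f where "f p = {fst p, snd p}" for p :: "'n \<times> 'n"
  have fP: "finite ?P" by simp
  have fE: "finite (edges E)" by simp
  have sub: "f ` ?P \<subseteq> edges E" unfolding f_def edges_def by force
  have fib: "card {p. p \<in> ?P \<and> f p = e} = 2" if eE: "e \<in> edges E" for e
  proof -
    obtain a b where e: "e = {a, b}" and ab: "E a b" using eE unfolding edges_def by blast
    have ne: "a \<noteq> b" using g ab unfolding simple_graph_def by auto
    have ba: "E b a" using g ab unfolding simple_graph_def by auto
    have "{p. p \<in> ?P \<and> f p = e} = {(a,b),(b,a)}"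
      using ab ba unfolding f_def e by (auto simp: doubleton_eq_iff)
    then show ?thesis using ne by simp
  qed
  have "card ?P = (\<Sum>p\<in>?P. 1)" by simp
  also have "\<dots> = (\<Sum>e\<in>edges E. \<Sum>p\<in>{p. p \<in> ?P \<and> f p = e}. 1)"
    using sum.group[OF fP fE sub, of "\<lambda>_. 1::nat"] by simp
  also have "\<dots> = (\<Sum>e\<in>edges E. 2)" using fib by (intro sum.cong) auto
  finally show ?thesis by simp
qed

lemma sym_sum:
  fixes E :: "'n::finite \<Rightarrow> 'n \<Rightarrow> bool"
  assumes g: "simple_graph E"
  shows "(\<Sum>(u,v)\<in>(SIGMA u:UNIV. {v. E u v}). h u v) = (\<Sum>(u,v)\<in>(SIGMA u:UNIV. {v. E u v}). (h v u :: real))"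
proof -
  let ?P = "SIGMA u:UNIV. {v. E u v}"
  have im: "prod.swap ` ?P = ?P" using g unfolding simple_graph_def by force
  have "(\<Sum>(u,v)\<in>?P. h u v) = (\<Sum>(u,v)\<in>prod.swap ` ?P. h u v)" using im by simp
  also have "\<dots> = (\<Sum>(u,v)\<in>?P. h v u)"
    by (subst sum.reindex) (auto simp: comp_def case_prod_beta)
  finally show ?thesis .
qed

lemma lap_mult:
  fixes E :: "'n::finite \<Rightarrow> 'n \<Rightarrow> bool"
  assumes g: "simple_graph E"
  shows "(laplacian E *v x) $ u = real (degree E u) * x$u - (\<Sum>v\<in>{v. E u v}. x$v)"
proof -
  have "(laplacian E *v x) $ u = (\<Sum>j\<in>UNIV. (if u = j then real (degree E u) * x$j else 0) + (if E u j then - x$j else 0))"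
    unfolding matrix_vector_mult_def laplacian_def using g unfolding simple_graph_def
    by (auto intro!: sum.cong)
  also have "\<dots> = real (degree E u) * x$u - (\<Sum>v\<in>{v. E u v}. x$v)"
    by (simp add: sum.distrib sum.inter_filter[symmetric] sum_negf)
  finally show ?thesis .
qed

lemma lap_quad:
  fixes E :: "'n::finite \<Rightarrow> 'n \<Rightarrow> bool"
  assumes g: "simple_graph E"
  shows "x \<bullet> (laplacian E *v x) = (\<Sum>(u,v)\<in>(SIGMA u:UNIV. {v. E u v}). (x$u - x$v)^2) / 2"
proof -
  let ?P = "SIGMA u:UNIV. {v. E u v}"
  have "x \<bullet> (laplacian E *v x) = (\<Sum>u\<in>UNIV. x$u * (real (degree E u) * x$u - (\<Sum>v\<in>{v. E u v}. x$v)))"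
    unfolding inner_vec_def using lap_mult[OF g] by simp
  also have "\<dots> = (\<Sum>u\<in>UNIV. \<Sum>v\<in>{v. E u v}. x$u * x$u - x$u * x$v)"
    by (intro sum.cong refl) (simp add: sum_subtractf sum_distrib_left degree_def algebra_simps)
  also have "\<dots> = (\<Sum>(u,v)\<in>?P. x$u * x$u - x$u * x$v)"
    by (simp add: sum.Sigma)
  finally have A: "x \<bullet> (laplacian E *v x) = (\<Sum>(u,v)\<in>?P. x$u * x$u - x$u * x$v)" .
  have "(\<Sum>(u,v)\<in>?P. (x$u - x$v)^2) = (\<Sum>(u,v)\<in>?P. (x$u * x$u - x$u * x$v) + (x$v * x$v - x$v * x$u))"
    by (intro sum.cong refl) (auto simp: power2_eq_square algebra_simps)
  also have "\<dots> = (\<Sum>(u,v)\<in>?P. x$u * x$u - x$u * x$v) + (\<Sum>(u,v)\<in>?P. x$v * x$v - x$v * x$u)"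
    by (simp only: sum.distrib[symmetric] split_def)
  also have "(\<Sum>(u,v)\<in>?P. x$v * x$v - x$v * x$u) = (\<Sum>(u,v)\<in>?P. x$u * x$u - x$u * x$v)"
    using sym_sum[OF g, of "\<lambda>u v. x$u * x$u - x$u * x$v"] by simp
  finally show ?thesis using A by simp
qed

theorem theorem2:
  fixes E :: "'n::finite \<Rightarrow> 'n \<Rightarrow> bool"
  assumes "simple_graph E"
  defines "n \<equiv> real CARD('n)" and "m \<equiv> real (card (edges E))"
  shows "irregularity E \<le> sqrt (m * (n * zagreb1 E - 4 * m ^ 2) * (lambda_max E / n))"
proof -
  note g = assms(1)
  let ?P = "SIGMA u:UNIV. {v. E u v}"
  define d where "d u = real (degree E u)" for u
  define c where "c = 2 * m / n"
  define x where "x = (\<chi> u. d u - c)"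
  define S where "S = (\<Sum>(u,v)\<in>?P. (d u - d v)^2)"
  define T where "T = (\<Sum>(u,v)\<in>?P. \<bar>d u - d v\<bar>)"
  have npos: "n > 0" unfolding n_def by simp
  have m0: "m \<ge> 0" unfolding m_def by simp
  have cardP: "real (card ?P) = 2 * m" using handshake[OF g] unfolding m_def by simp
  have sumd: "(\<Sum>u\<in>UNIV. d u) = 2 * m"
  proof -
    have "real (card ?P) = (\<Sum>u\<in>UNIV. d u)" unfolding d_def degree_def by simp
    then show ?thesis using cardP by simp
  qed
  have I: "irregularity E = T / 2"
    unfolding irregularity_def T_def d_def by (simp add: sum.Sigma)
  have Q: "x \<bullet> (laplacian E *v x) = S / 2"
    unfolding lap_quad[OF g] S_def x_def by simp
  have xx: "x \<bullet> x = zagreb1 E - 4 * m^2 / n"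
  proof -
    have "x \<bullet> x = (\<Sum>u\<in>UNIV. d u ^ 2 - 2 * c * d u + c^2)"
      unfolding x_def inner_vec_def by (intro sum.cong refl) (simp add: power2_eq_square algebra_simps)
    also have "\<dots> = zagreb1 E - 2 * c * (2 * m) + n * c^2"
      unfolding zagreb1_def d_def[symmetric] using sumd
      by (simp add: sum.distrib sum_subtractf sum_distrib_left[symmetric] n_def)
    also have "\<dots> = zagreb1 E - 4 * m^2 / n"
      unfolding c_def using npos by (simp add: field_simps power2_eq_square)
    finally show ?thesis .
  qed
  have CS: "T^2 \<le> 2 * m * S"
  proof -
    have "T^2 = (\<Sum>p\<in>?P. 1 * \<bar>d (fst p) - d (snd p)\<bar>)^2" unfolding T_def by (simp add: split_def)
    also have "\<dots> \<le> (\<Sum>p\<in>?P. 1^2) * (\<Sum>p\<in>?P. \<bar>d (fst p) - d (snd p)\<bar>^2)"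
      by (rule Cauchy_Schwarz_ineq_sum)
    also have "\<dots> = 2 * m * S" using cardP unfolding S_def by (simp add: split_def)
    finally show ?thesis .
  qed
  obtain l where l: "mat_eigenvalue (laplacian E) l" and lb: "\<And>y. y \<bullet> (laplacian E *v y) \<le> l * (y \<bullet> y)"
    using rayleigh[of "laplacian E"] lap_sym[OF g] by blast
  have "l \<le> lambda_max E"
    unfolding lambda_max_def using l finite_eig[of "laplacian E"] lap_sym[OF g] by (intro Max_ge) auto
  have xnn: "x \<bullet> x \<ge> 0" by simp
  have "S / 2 \<le> l * (x \<bullet> x)" using lb[of x] Q by simp
  also have "\<dots> \<le> lambda_max E * (x \<bullet> x)" using \<open>l \<le> lambda_max E\<close> xnn by (rule mult_right_mono)
  finally have S2: "S / 2 \<le> lambda_max E * (x \<bullet> x)" .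
  have "(irregularity E)^2 = T^2 / 4" unfolding I by (simp add: power2_eq_square)
  also have "\<dots> \<le> m * (S / 2)" using CS by simp
  also have "\<dots> \<le> m * (lambda_max E * (x \<bullet> x))" using S2 m0 by (rule mult_left_mono)
  also have "\<dots> = m * (n * zagreb1 E - 4 * m ^ 2) * (lambda_max E / n)"
    unfolding xx using npos by (simp add: field_simps)
  finally show ?thesis by (rule real_le_rsqrt)
qed

end
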